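(* Let $S$ be a multiplicatively closed subset of $R$, $I$ an ideal of $R$, and $M$ an $R$-module. (a) If $S^{-1}I\subseteq W_{S^{-1}R}(S^{-1}M)$, then $I\subseteq W_R(M)$. (b) If $Z_R(M)\cap S=\emptyset$, $W_R(M)\cap S=\emptyset$, and $I\subseteq W_R(M)$, then $S^{-1}I\subseteq W_{S^{-1}R}(S^{-1}M)$. (c) If $M$ is Hopfian, $W_R(M)\cap S=\emptyset$, and $I\subseteq W_R(M)$, then $S^{-1}I\subseteq W_{S^{-1}R}(S^{-1}M)$.
   Context: All rings are commutative with identity. For an $R$-module $M$, $W_R(M)=\{r\in R : rM\neq M\}$ and $Z_R(M)=\{r\in R: rm=0 \text{ for some } 0\neq m\in M\}$. $M$ is Hopfian if every surjective endomorphism of $M$ is an isomorphism. *)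

theory Defs
  imports Main "HOL.Modules"
begin

definition is_ideal :: "'a::comm_ring_1 set \<Rightarrow> bool" where
  "is_ideal I \<longleftrightarrow> 0 \<in> I \<and> (\<forall>x\<in>I. \<forall>y\<in>I. x + y \<in> I) \<and> (\<forall>c. \<forall>x\<in>I. c * x \<in> I)"

definition mult_closed :: "'a::comm_ring_1 set \<Rightarrow> bool" where
  "mult_closed S \<longleftrightarrow> 1 \<in> S \<and> (\<forall>s\<in>S. \<forall>t\<in>S. s * t \<in> S)"

definition W_set :: "('a::comm_ring_1 \<Rightarrow> 'b \<Rightarrow> 'b) \<Rightarrow> 'a set" where
  "W_set scale = {r. range (scale r) \<noteq> UNIV}"

definition Z_set :: "('a::comm_ring_1 \<Rightarrow> 'b::zero \<Rightarrow> 'b) \<Rightarrow> 'a set" where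
  "Z_set scale = {r. \<exists>m. m \<noteq> 0 \<and> scale r m = 0}"

definition hopfian :: "('a::comm_ring_1 \<Rightarrow> 'b::ab_group_add \<Rightarrow> 'b) \<Rightarrow> bool" where
  "hopfian scale \<longleftrightarrow> (\<forall>f. module_hom scale scale f \<and> surj f \<longrightarrow> inj f)"

definition loc_rel_ring :: "'a::comm_ring_1 set \<Rightarrow> (('a \<times> 'a) \<times> ('a \<times> 'a)) set" where
  "loc_rel_ring S = {((r, s), (r', s')). s \<in> S \<and> s' \<in> S \<and>
      (\<exists>u\<in>S. u * (r * s' - r' * s) = 0)}"

definition loc_rel_mod :: "('a::comm_ring_1 \<Rightarrow> 'b::ab_group_add \<Rightarrow> 'b) \<Rightarrow> 'a set
    \<Rightarrow> (('b \<times> 'a) \<times> ('b \<times> 'a)) set" where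
  "loc_rel_mod scale S = {((m, s), (m', s')). s \<in> S \<and> s' \<in> S \<and>
      (\<exists>u\<in>S. scale u (scale s' m - scale s m') = 0)}"

definition loc_ring :: "'a::comm_ring_1 set \<Rightarrow> ('a \<times> 'a) set set" where
  "loc_ring S = (UNIV \<times> S) // loc_rel_ring S"

definition loc_mod :: "('a::comm_ring_1 \<Rightarrow> 'b::ab_group_add \<Rightarrow> 'b) \<Rightarrow> 'a set
    \<Rightarrow> ('b \<times> 'a) set set" where
  "loc_mod scale S = (UNIV \<times> S) // loc_rel_mod scale S"

definition frac_ring :: "'a::comm_ring_1 set \<Rightarrow> 'a \<Rightarrow> 'a \<Rightarrow> ('a \<times> 'a) set" where
  "frac_ring S r s = loc_rel_ring S `` {(r, s)}"

definition frac_mod :: "('a::comm_ring_1 \<Rightarrow> 'b::ab_group_add \<Rightarrow> 'b) \<Rightarrow> 'a set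
    \<Rightarrow> 'b \<Rightarrow> 'a \<Rightarrow> ('b \<times> 'a) set" where
  "frac_mod scale S m s = loc_rel_mod scale S `` {(m, s)}"

definition loc_scale :: "('a::comm_ring_1 \<Rightarrow> 'b::ab_group_add \<Rightarrow> 'b) \<Rightarrow> 'a set
    \<Rightarrow> ('a \<times> 'a) set \<Rightarrow> ('b \<times> 'a) set \<Rightarrow> ('b \<times> 'a) set" where
  "loc_scale scale S X Y = (\<Union>(r, t)\<in>X. \<Union>(m, s)\<in>Y. frac_mod scale S (scale r m) (t * s))"

definition loc_ideal :: "'a::comm_ring_1 set \<Rightarrow> 'a set \<Rightarrow> ('a \<times> 'a) set set" where
  "loc_ideal S I = {frac_ring S a s | a s. a \<in> I \<and> s \<in> S}"

definition W_loc :: "('a::comm_ring_1 \<Rightarrow> 'b::ab_group_add \<Rightarrow> 'b) \<Rightarrow> 'a set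
    \<Rightarrow> ('a \<times> 'a) set set" where
  "W_loc scale S = {x \<in> loc_ring S. loc_scale scale S x ` loc_mod scale S \<noteq> loc_mod scale S}"

end

theory Submission
  imports Defs
begin

context module
begin

lemma rel_mod_iff: "((m, s), (m', s')) \<in> loc_rel_mod scale S \<longleftrightarrow>
   s \<in> S \<and> s' \<in> S \<and> (\<exists>u\<in>S. scale (u* s') m = scale (u* s) m')"
  unfolding loc_rel_mod_def
  by (auto simp: scale_right_diff_distrib)

lemma equiv_mod:
  assumes S: "mult_closed S"
  shows "equiv (UNIV \<times> S) (loc_rel_mod scale S)"
proof (rule equivI)
  show "loc_rel_mod scale S \<subseteq> (UNIV \<times> S) \<times> (UNIV \<times> S)"
    unfolding loc_rel_mod_def by auto
  show "refl_on (UNIV \<times> S) (loc_rel_mod scale S)"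
  proof (rule refl_onI)
    fix x :: "'b \<times> 'a" assume "x \<in> UNIV \<times> S"
    then show "(x, x) \<in> loc_rel_mod scale S" using S
      by (cases x) (auto simp: rel_mod_iff mult_closed_def)
  qed
  show "sym (loc_rel_mod scale S)"
    unfolding sym_def by (auto simp: rel_mod_iff) (metis)
  show "trans (loc_rel_mod scale S)"
  proof (rule transI)
    fix x y z assume xy: "(x, y) \<in> loc_rel_mod scale S" and yz: "(y, z) \<in> loc_rel_mod scale S"
    obtain m s where x: "x = (m, s)" by (cases x)
    obtain m' s' where y: "y = (m', s')" by (cases y)
    obtain m'' s'' where z: "z = (m'', s'')" by (cases z)
    from xy obtain u where u: "u \<in> S" "s \<in> S" "s' \<in> S" "scale (u* s') m = scale (u* s) m'"
      by (auto simp: x y rel_mod_iff)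
    from yz obtain v where v: "v \<in> S" "s'' \<in> S" "scale (v* s'') m' = scale (v* s') m''"
      by (auto simp: z y rel_mod_iff)
    have w: "u*v* s' \<in> S" using S u v by (auto simp: mult_closed_def)
    have "scale (u*v* s'* s'') m = scale (v* s'') (scale (u* s') m)" by (simp add: ac_simps)
    also have "\<dots> = scale (v* s'') (scale (u* s) m')" using u by simp
    also have "\<dots> = scale (u* s) (scale (v* s'') m')" by (simp add: ac_simps)
    also have "\<dots> = scale (u* s) (scale (v* s') m'')" using v by simp
    also have "\<dots> = scale (u*v* s'* s) m''" by (simp add: ac_simps)
    finally show "(x, z) \<in> loc_rel_mod scale S"
      using w u v by (auto simp: x z rel_mod_iff)
  qed
qed

lemma frac_mod_eq:
  assumes S: "mult_closed S" and "((m, s), (m', s')) \<in> loc_rel_mod scale S"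
  shows "frac_mod scale S m s = frac_mod scale S m' s'"
  unfolding frac_mod_def using equiv_class_eq[OF equiv_mod[OF S] assms(2)] .

lemma frac_mod_in: "mult_closed S \<Longrightarrow> s \<in> S \<Longrightarrow> frac_mod scale S m s \<in> loc_mod scale S"
  unfolding frac_mod_def loc_mod_def by (auto intro: quotientI)

lemma frac_mod_self: "mult_closed S \<Longrightarrow> s \<in> S \<Longrightarrow> (m, s) \<in> frac_mod scale S m s"
  unfolding frac_mod_def by (auto simp: rel_mod_iff mult_closed_def)

lemma loc_mod_elem: "mult_closed S \<Longrightarrow> Y \<in> loc_mod scale S \<Longrightarrow> \<exists>m s. s \<in> S \<and> Y = frac_mod scale S m s"
  unfolding loc_mod_def frac_mod_def by (auto elim!: quotientE)

lemma loc_scale_frac: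
  assumes S: "mult_closed S" and t: "t \<in> S" and s: "s \<in> S"
  shows "loc_scale scale S (frac_ring S r t) (frac_mod scale S m s) = frac_mod scale S (scale r m) (t* s)"
proof
  have "(r, t) \<in> frac_ring S r t" using t unfolding frac_ring_def loc_rel_ring_def by auto
  moreover have "(m, s) \<in> frac_mod scale S m s" using frac_mod_self[OF S s] .
  ultimately show "frac_mod scale S (scale r m) (t* s) \<subseteq> loc_scale scale S (frac_ring S r t) (frac_mod scale S m s)"
    unfolding loc_scale_def by blast
next
  show "loc_scale scale S (frac_ring S r t) (frac_mod scale S m s) \<subseteq> frac_mod scale S (scale r m) (t* s)"
    unfolding loc_scale_def
  proof (clarify)
    fix x r' t' m' s'
    assume a: "(r', t') \<in> frac_ring S r t" "(m', s') \<in> frac_mod scale S m s"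
      "x \<in> frac_mod scale S (scale r' m') (t' * s')"
    from a(1) obtain u where u: "u \<in> S" "t' \<in> S" "u * (r * t' - r' * t) = 0"
      unfolding frac_ring_def loc_rel_ring_def by auto
    have ue: "u*r*t' = u*r'*t" using u(3) by (simp add: algebra_simps)
    from a(2) obtain v where v: "v \<in> S" "s' \<in> S" "scale (v* s') m = scale (v* s) m'"
      unfolding frac_mod_def by (auto simp: rel_mod_iff)
    have w: "u*v \<in> S" using S u v by (auto simp: mult_closed_def)
    have "scale (u*v*(t'* s')) (scale r m) = scale (u*r*t') (scale (v* s') m)" by (simp add: ac_simps)
    also have "\<dots> = scale (u*r'*t) (scale (v* s) m')" using ue v by simp
    also have "\<dots> = scale (u*v*(t* s)) (scale r' m')" by (simp add: ac_simps)
    finally have "((scale r m, t* s), (scale r' m', t'* s')) \<in> loc_rel_mod scale S"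
      using w S t s u v by (auto simp: rel_mod_iff mult_closed_def)
    then have "frac_mod scale S (scale r' m') (t' * s') = frac_mod scale S (scale r m) (t* s)"
      using frac_mod_eq[OF S] by metis
    then show "x \<in> frac_mod scale S (scale r m) (t* s)" using a(3) by simp
  qed
qed

lemma frac_ring_in: "s \<in> S \<Longrightarrow> frac_ring S r s \<in> loc_ring S"
  unfolding frac_ring_def loc_ring_def by (auto intro: quotientI)

lemma partA:
  assumes S: "mult_closed S" and I: "is_ideal I" and H: "loc_ideal S I \<subseteq> W_loc scale S"
  shows "I \<subseteq> W_set scale"
proof
  fix a assume a: "a \<in> I"
  show "a \<in> W_set scale"
  proof (rule ccontr)
    assume "a \<notin> W_set scale"
    then have sur: "range (scale a) = UNIV" by (simp add: W_set_def)
    have one: "1 \<in> S" using S by (simp add: mult_closed_def)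
    have "frac_ring S a 1 \<in> loc_ideal S I" using a one unfolding loc_ideal_def by blast
    with H have ne: "loc_scale scale S (frac_ring S a 1) ` loc_mod scale S \<noteq> loc_mod scale S"
      unfolding W_loc_def by auto
    have "loc_scale scale S (frac_ring S a 1) ` loc_mod scale S = loc_mod scale S"
    proof
      show "loc_scale scale S (frac_ring S a 1) ` loc_mod scale S \<subseteq> loc_mod scale S"
      proof
        fix Z assume "Z \<in> loc_scale scale S (frac_ring S a 1) ` loc_mod scale S"
        then obtain Y where Y: "Y \<in> loc_mod scale S" "Z = loc_scale scale S (frac_ring S a 1) Y" by blast
        from loc_mod_elem[OF S Y(1)] obtain m s where "s \<in> S" "Y = frac_mod scale S m s" by blast
        then show "Z \<in> loc_mod scale S" using Y loc_scale_frac[OF S one] frac_mod_in[OF S] by simp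
      qed
    next
      show "loc_mod scale S \<subseteq> loc_scale scale S (frac_ring S a 1) ` loc_mod scale S"
      proof
        fix Y assume Y: "Y \<in> loc_mod scale S"
        from loc_mod_elem[OF S Y] obtain m s where ms: "s \<in> S" "Y = frac_mod scale S m s" by blast
        from sur obtain m' where "m = scale a m'" by (metis UNIV_I imageE)
        then have "Y = loc_scale scale S (frac_ring S a 1) (frac_mod scale S m' s)"
          using ms loc_scale_frac[OF S one ms(1)] by simp
        then show "Y \<in> loc_scale scale S (frac_ring S a 1) ` loc_mod scale S"
          using frac_mod_in[OF S ms(1)] by blast
      qed
    qed
    with ne show False by simp
  qed
qed

lemma partB:
  assumes S: "mult_closed S" and Z: "Z_set scale \<inter> S = {}" and W: "W_set scale \<inter> S = {}"
    and IW: "I \<subseteq> W_set scale"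
  shows "loc_ideal S I \<subseteq> W_loc scale S"
proof
  fix X assume "X \<in> loc_ideal S I"
  then obtain a s where as: "a \<in> I" "s \<in> S" "X = frac_ring S a s" unfolding loc_ideal_def by blast
  have one: "1 \<in> S" using S by (simp add: mult_closed_def)
  have XR: "X \<in> loc_ring S" using as frac_ring_in by simp
  have "loc_scale scale S X ` loc_mod scale S \<noteq> loc_mod scale S"
  proof
    assume eq: "loc_scale scale S X ` loc_mod scale S = loc_mod scale S"
    from as IW have "range (scale a) \<noteq> UNIV" by (auto simp: W_set_def)
    then obtain m where m: "m \<notin> range (scale a)" by blast
    have "frac_mod scale S m 1 \<in> loc_mod scale S" using frac_mod_in[OF S one] .
    with eq obtain Y where Y: "Y \<in> loc_mod scale S" "frac_mod scale S m 1 = loc_scale scale S X Y"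
      by (metis imageE)
    from loc_mod_elem[OF S Y(1)] obtain m' t where mt: "t \<in> S" "Y = frac_mod scale S m' t" by blast
    have "frac_mod scale S m 1 = frac_mod scale S (scale a m') (s*t)"
      using Y mt as loc_scale_frac[OF S as(2) mt(1)] by simp
    moreover have "(m, 1) \<in> frac_mod scale S m 1" using frac_mod_self[OF S one] .
    ultimately have "((scale a m', s*t), (m, 1)) \<in> loc_rel_mod scale S"
      unfolding frac_mod_def by simp
    then obtain u where u: "u \<in> S" "scale (u*1) (scale a m') = scale (u*(s*t)) m"
      by (auto simp: rel_mod_iff)
    define w where "w = u*(s*t)"
    have wS: "w \<in> S" using S u as mt unfolding w_def mult_closed_def by auto
    have wsur: "range (scale w) = UNIV" using W wS by (auto simp: W_set_def)
    have winj: "\<And>x. scale w x = 0 \<Longrightarrow> x = 0" using Z wS by (auto simp: Z_set_def)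
    obtain n where n: "scale u m' = scale w n" using wsur by (metis UNIV_I imageE)
    have "scale w m = scale a (scale u m')" using u unfolding w_def by (simp add: ac_simps)
    also have "\<dots> = scale w (scale a n)" using n by (simp add: ac_simps)
    finally have "scale w (m - scale a n) = 0" by (simp add: scale_right_diff_distrib)
    then have "m = scale a n" using winj[of "m - scale a n"] by simp
    with m show False by simp
  qed
  with XR show "X \<in> W_loc scale S" unfolding W_loc_def by simp
qed

lemma partC:
  assumes S: "mult_closed S" and H: "hopfian scale" and W: "W_set scale \<inter> S = {}"
    and IW: "I \<subseteq> W_set scale"
  shows "loc_ideal S I \<subseteq> W_loc scale S"
proof (rule partB[OF S _ W IW])
  show "Z_set scale \<inter> S = {}"
  proof (rule ccontr)
    assume "Z_set scale \<inter> S \<noteq> {}"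
    then obtain x m where x: "x \<in> S" "m \<noteq> 0" "scale x m = 0" by (auto simp: Z_set_def)
    have "surj (scale x)" using W x by (auto simp: W_set_def)
    then have "inj (scale x)" using H module_hom_scale_self unfolding hopfian_def by blast
    then have "m = 0" using x by (metis scale_zero_right injD)
    with x show False by simp
  qed
qed

end

theorem lemma2p9:
  fixes scale :: "'a::comm_ring_1 \<Rightarrow> 'b::ab_group_add \<Rightarrow> 'b"
    and S I :: "'a set"
  assumes M: "module scale"
    and S: "mult_closed S"
    and I: "is_ideal I"
  shows "(loc_ideal S I \<subseteq> W_loc scale S \<longrightarrow> I \<subseteq> W_set scale)
       \<and> (Z_set scale \<inter> S = {} \<and> W_set scale \<inter> S = {} \<and> I \<subseteq> W_set scale
           \<longrightarrow> loc_ideal S I \<subseteq> W_loc scale S)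
       \<and> (hopfian scale \<and> W_set scale \<inter> S = {} \<and> I \<subseteq> W_set scale
           \<longrightarrow> loc_ideal S I \<subseteq> W_loc scale S)"
  using module.partA[OF M S I] module.partB[OF M S] module.partC[OF M S] by blast

end
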